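(* Fix $\Delta x>0$, $\sigma\in\mathbb R$ and arbitrary complex coefficients $C_{lj}$ ($j\in\mathbb Z$, $l\in N(j)$). Let $\mathcal K_1$ be the set of $\mathbb K\in\mathbb R$ for which there exists $A>0$ such that, with $\mu=\frac12\mathbb K^2$, the discrete stochastic plane wave $u_j(t)=A\,e^{\mathbf i(\mathbb K x_j-\mu t-\sigma W(t))}$, $j\in\mathbb Z$, solves (L1). Let $\mathcal K_2$ be the set of $\mathbb K\in\mathbb R$ for which there exists $A>0$ such that, with $\mu=\frac12\mathbb K^2$, the wave $u_j(t)=A\,e^{\mathbf i(\mathbb K x_j-\mu W(t))}$, $j\in\mathbb Z$, solves (L2). Then $\mathcal K_1$ and $\mathcal K_2$ are finite. In other words, a linear discretization admits at most finitely many pairs $(\mu,\mathbb K)$ with $\mu=\frac12|\mathbb K|^2$ for which the discrete stochastic plane wave is a solution.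
   Context: Let $W$ be a standard real Brownian motion on a complete filtered probability space. Consider the one-dimensional lattice with nodes $j\in\mathbb Z$, coordinates $x_j=j\Delta x$, and neighbour sets $N(j)=\{j-1,j+1\}$. A linear discretization of the stochastic linear Schrödinger equation $\mathbf i\,du=-\frac12\Delta u\,dt+\sigma u\circ dW_t$ is the system (L1) $\mathbf i\,du_j=-\frac12\sum_{l\in N(j)}C_{lj}u_l\,dt+\sigma u_j\circ dW_t$, $j\in\mathbb Z$. A linear discretization of the white-noise-dispersion equation $\mathbf i\,du=-\frac12\Delta u\circ dW_t$ is the system (L2) $\mathbf i\,du_j=-\frac12\sum_{l\in N(j)}C_{lj}u_l\circ dW_t$, $j\in\mathbb Z$. Both stochastic differentials are in the Stratonovich sense. *)

theory Defs
  imports "HOL-Probability.Probability"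
begin

definition std_brownian :: "'a measure \<Rightarrow> (real \<Rightarrow> 'a \<Rightarrow> real) \<Rightarrow> bool" where
  "std_brownian M W \<longleftrightarrow>
     prob_space M \<and>
     (\<forall>t. W t \<in> borel_measurable M) \<and>
     (\<forall>\<omega>\<in>space M. W 0 \<omega> = 0 \<and> continuous_on {0..} (\<lambda>t. W t \<omega>)) \<and>
     (\<forall>s t. 0 \<le> s \<and> s < t \<longrightarrow>
        distributed M lborel (\<lambda>\<omega>. W t \<omega> - W s \<omega>)
          (\<lambda>x. ennreal (normal_density 0 (sqrt (t - s)) x))) \<and>
     (\<forall>(n::nat) (\<tau>::nat \<Rightarrow> real). 0 \<le> \<tau> 0 \<and> (\<forall>k<n. \<tau> k < \<tau> (Suc k)) \<longrightarrow>
        prob_space.indep_vars M (\<lambda>_. borel) (\<lambda>k \<omega>. W (\<tau> (Suc k)) \<omega> - W (\<tau> k) \<omega>) {..<n})"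

definition strat_integral_is ::
  "'a measure \<Rightarrow> (real \<Rightarrow> 'a \<Rightarrow> real) \<Rightarrow> (real \<Rightarrow> 'a \<Rightarrow> complex) \<Rightarrow> real \<Rightarrow> ('a \<Rightarrow> complex) \<Rightarrow> bool"
where
  "strat_integral_is M W Y t I \<longleftrightarrow>
     I \<in> borel_measurable M \<and>
     (\<forall>\<epsilon>>0. \<forall>\<eta>>0. \<exists>\<delta>>0. \<forall>(n::nat) (\<tau>::nat \<Rightarrow> real).
        \<tau> 0 = 0 \<and> \<tau> n = t \<and> (\<forall>k<n. \<tau> k < \<tau> (Suc k) \<and> \<tau> (Suc k) - \<tau> k < \<delta>) \<longrightarrow>
        measure M {\<omega>\<in>space M.
           norm ((\<Sum>k<n. (Y (\<tau> k) \<omega> + Y (\<tau> (Suc k)) \<omega>) / 2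
                    * complex_of_real (W (\<tau> (Suc k)) \<omega> - W (\<tau> k) \<omega>)) - I \<omega>) > \<epsilon>} < \<eta>)"

definition nbr :: "int \<Rightarrow> int set" where
  "nbr j = {j - 1, j + 1}"

definition lattice_process :: "'a measure \<Rightarrow> (int \<Rightarrow> real \<Rightarrow> 'a \<Rightarrow> complex) \<Rightarrow> bool" where
  "lattice_process M u \<longleftrightarrow>
     (\<forall>j t. u j t \<in> borel_measurable M) \<and>
     (\<forall>j. \<forall>\<omega>\<in>space M. continuous_on {0..} (\<lambda>s. u j s \<omega>))"

definition solves_L1 ::
  "'a measure \<Rightarrow> (real \<Rightarrow> 'a \<Rightarrow> real) \<Rightarrow> (int \<Rightarrow> int \<Rightarrow> complex) \<Rightarrow> real
     \<Rightarrow> (int \<Rightarrow> real \<Rightarrow> 'a \<Rightarrow> complex) \<Rightarrow> bool" where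
  "solves_L1 M W C \<sigma> u \<longleftrightarrow> lattice_process M u \<and>
     (\<forall>j. \<forall>t\<ge>0. \<exists>I. strat_integral_is M W (u j) t I \<and>
        (AE \<omega> in M. \<i> * (u j t \<omega> - u j 0 \<omega>) =
            - (1/2) * integral {0..t} (\<lambda>s. \<Sum>l\<in>nbr j. C l j * u l s \<omega>)
            + complex_of_real \<sigma> * I \<omega>))"

definition solves_L2 ::
  "'a measure \<Rightarrow> (real \<Rightarrow> 'a \<Rightarrow> real) \<Rightarrow> (int \<Rightarrow> int \<Rightarrow> complex)
     \<Rightarrow> (int \<Rightarrow> real \<Rightarrow> 'a \<Rightarrow> complex) \<Rightarrow> bool" where
  "solves_L2 M W C u \<longleftrightarrow> lattice_process M u \<and>
     (\<forall>j. \<forall>t\<ge>0. \<exists>I. strat_integral_is M W (\<lambda>s \<omega>. \<Sum>l\<in>nbr j. C l j * u l s \<omega>) t I \<and>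
        (AE \<omega> in M. \<i> * (u j t \<omega> - u j 0 \<omega>) = - (1/2) * I \<omega>))"

end

theory Submission
  imports Defs "HOL-Complex_Analysis.Conformal_Mappings"
begin

lemma sin_cubic: fixes x :: real shows "\<bar>sin x - x * cos x\<bar> \<le> \<bar>x\<bar>^3"
proof -
  have D: "\<And>y. ((\<lambda>y. sin y - y * cos y) has_real_derivative (y * sin y)) (at y)"
    by (auto intro!: derivative_eq_intros simp: algebra_simps)
  have key: "\<And>z. \<bar>z\<bar> \<le> \<bar>x\<bar> \<Longrightarrow> \<bar>x * (z * sin z)\<bar> \<le> \<bar>x\<bar>^3"
  proof -
    fix z :: real assume z: "\<bar>z\<bar> \<le> \<bar>x\<bar>"
    have "\<bar>z * sin z\<bar> \<le> \<bar>z\<bar> * \<bar>z\<bar>" unfolding abs_mult by (rule mult_left_mono[OF abs_sin_x_le_abs_x]) simp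
    also have "\<dots> \<le> \<bar>x\<bar> * \<bar>x\<bar>" using z by (intro mult_mono) auto
    finally have "\<bar>x\<bar> * \<bar>z * sin z\<bar> \<le> \<bar>x\<bar> * (\<bar>x\<bar> * \<bar>x\<bar>)"
      by (intro mult_left_mono) auto
    then show "\<bar>x * (z * sin z)\<bar> \<le> \<bar>x\<bar>^3"
      by (simp add: abs_mult power3_eq_cube)
  qed
  show ?thesis
  proof (cases "x = 0")
    case True then show ?thesis by simp
  next
    case False
    show ?thesis
    proof (cases "0 < x")
      case True
      obtain z where "0 < z" "z < x" "(sin x - x * cos x) - (sin 0 - 0 * cos 0) = (x - 0) * (z * sin z)"
        using MVT2[of 0 x "\<lambda>y. sin y - y * cos y" "\<lambda>y. y * sin y"] D True by blast
      then show ?thesis using key[of z] by simp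
    next
      case False
      with \<open>x \<noteq> 0\<close> have "x < 0" by simp
      obtain z where "x < z" "z < 0" "(sin 0 - 0 * cos 0) - (sin x - x * cos x) = (0 - x) * (z * sin z)"
        using MVT2[of x 0 "\<lambda>y. sin y - y * cos y" "\<lambda>y. y * sin y"] D \<open>x < 0\<close> by blast
      then show ?thesis using key[of z] by simp
    qed
  qed
qed

lemma trap_bound:
  fixes a b :: real
  shows "norm (exp (\<i> * of_real b) - exp (\<i> * of_real a)
          - \<i> * of_real (b - a) * (exp (\<i> * of_real a) + exp (\<i> * of_real b)) / 2) \<le> \<bar>b - a\<bar>^3"
proof -
  define x where "x = (b - a) / 2"
  define c where "c = (a + b) / 2"
  have a: "a = c + (-x)" and b: "b = c + x" unfolding x_def c_def by (simp_all add: field_simps)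
  have ea: "exp (\<i> * of_real a) = cis c * cis (-x)"
    unfolding a cis_mult by (simp add: cis_conv_exp)
  have eb: "exp (\<i> * of_real b) = cis c * cis x"
    unfolding b cis_mult by (simp add: cis_conv_exp)
  have ba: "b - a = 2 * x" unfolding x_def by simp
  have "exp (\<i> * of_real b) - exp (\<i> * of_real a)
          - \<i> * of_real (b - a) * (exp (\<i> * of_real a) + exp (\<i> * of_real b)) / 2
        = cis c * Complex 0 (2 * (sin x - x * cos x))" (is "?lhs = _")
    unfolding ea eb ba by (simp add: complex_eq_iff algebra_simps cis.sel)
  then have "norm (exp (\<i> * of_real b) - exp (\<i> * of_real a)
          - \<i> * of_real (b - a) * (exp (\<i> * of_real a) + exp (\<i> * of_real b)) / 2)
        = 2 * \<bar>sin x - x * cos x\<bar>"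
  proof -
    assume h: "?lhs = cis c * Complex 0 (2 * (sin x - x * cos x))"
    show ?thesis unfolding h norm_mult by (simp add: complex_norm) (metis abs_mult abs_numeral right_diff_distrib)
  qed
  also have "\<dots> \<le> 2 * \<bar>x\<bar>^3" using sin_cubic[of x] by simp
  also have "\<dots> \<le> \<bar>b - a\<bar>^3" unfolding ba by (simp add: abs_mult power_mult_distrib)
  finally show ?thesis .
qed


definition tip :: "'a measure \<Rightarrow> (nat \<Rightarrow> 'a \<Rightarrow> complex) \<Rightarrow> ('a \<Rightarrow> complex) \<Rightarrow> bool" where
  "tip M f g \<longleftrightarrow> (\<forall>e>0. (\<lambda>m. measure M {\<omega>\<in>space M. e < norm (f m \<omega> - g \<omega>)}) \<longlonglongrightarrow> 0)"

lemma tip_mono_aux: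
  assumes "finite_measure M"
    and "\<And>m. A m \<in> sets M" "\<And>m. B m \<in> sets M" "\<And>m. C m \<in> sets M"
    and "\<And>m. C m \<subseteq> A m \<union> B m"
    and "(\<lambda>m. measure M (A m)) \<longlonglongrightarrow> 0" "(\<lambda>m. measure M (B m)) \<longlonglongrightarrow> 0"
  shows "(\<lambda>m. measure M (C m)) \<longlonglongrightarrow> 0"
proof (rule tendsto_sandwich[of "\<lambda>_. 0" _ _ "\<lambda>m. measure M (A m) + measure M (B m)"])
  show "\<forall>\<^sub>F n in sequentially. 0 \<le> measure M (C n)" by simp
  show "\<forall>\<^sub>F n in sequentially. measure M (C n) \<le> measure M (A n) + measure M (B n)"
  proof (intro always_eventually allI)
    fix n
    have "measure M (C n) \<le> measure M (A n \<union> B n)"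
      using assms by (intro finite_measure.finite_measure_mono) auto
    also have "\<dots> \<le> measure M (A n) + measure M (B n)"
      using assms by (intro measure_Un_le) auto
    finally show "measure M (C n) \<le> measure M (A n) + measure M (B n)" .
  qed
  show "(\<lambda>m. measure M (A m) + measure M (B m)) \<longlonglongrightarrow> 0"
    using tendsto_add[OF assms(6,7)] by simp
qed simp


lemma tip_add:
  assumes fm: "finite_measure M"
    and [measurable]: "\<And>m. f m \<in> borel_measurable M" "\<And>m. f' m \<in> borel_measurable M"
      "g \<in> borel_measurable M" "g' \<in> borel_measurable M"
    and t1: "tip M f g" and t2: "tip M f' g'"
  shows "tip M (\<lambda>m \<omega>. f m \<omega> + f' m \<omega>) (\<lambda>\<omega>. g \<omega> + g' \<omega>)"
  unfolding tip_def
proof (intro allI impI)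
  fix e :: real assume e: "0 < e"
  show "(\<lambda>m. measure M {\<omega>\<in>space M. e < norm (f m \<omega> + f' m \<omega> - (g \<omega> + g' \<omega>))}) \<longlonglongrightarrow> 0"
  proof (rule tip_mono_aux[OF fm])
    show "(\<lambda>m. measure M {\<omega>\<in>space M. e/2 < norm (f m \<omega> - g \<omega>)}) \<longlonglongrightarrow> 0"
      using t1 half_gt_zero[OF e] unfolding tip_def by blast
    show "(\<lambda>m. measure M {\<omega>\<in>space M. e/2 < norm (f' m \<omega> - g' \<omega>)}) \<longlonglongrightarrow> 0"
      using t2 half_gt_zero[OF e] unfolding tip_def by blast
    fix m
    show "{\<omega>\<in>space M. e < norm (f m \<omega> + f' m \<omega> - (g \<omega> + g' \<omega>))}
       \<subseteq> {\<omega>\<in>space M. e/2 < norm (f m \<omega> - g \<omega>)} \<union> {\<omega>\<in>space M. e/2 < norm (f' m \<omega> - g' \<omega>)}"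
    proof safe
      fix \<omega> assume "e < norm (f m \<omega> + f' m \<omega> - (g \<omega> + g' \<omega>))" "\<not> e/2 < norm (f' m \<omega> - g' \<omega>)"
      moreover have "norm (f m \<omega> + f' m \<omega> - (g \<omega> + g' \<omega>)) \<le> norm (f m \<omega> - g \<omega>) + norm (f' m \<omega> - g' \<omega>)"
        by (metis add_diff_add norm_triangle_ineq)
      ultimately show "e/2 < norm (f m \<omega> - g \<omega>)" by linarith
    qed
  qed measurable
qed


lemma tip_scale:
  assumes "tip M f g"
  shows "tip M (\<lambda>m \<omega>. c * f m \<omega>) (\<lambda>\<omega>. c * g \<omega>)"
proof (cases "c = 0")
  case True
  have em: "{\<omega>\<in>space M. e < norm (c * f m \<omega> - c * g \<omega>)} = {}" if "e > 0" for e m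
    using True that by auto
  show ?thesis unfolding tip_def
  proof (intro allI impI)
    fix e :: real assume "e > 0"
    then show "(\<lambda>m. measure M {\<omega>\<in>space M. e < norm (c * f m \<omega> - c * g \<omega>)}) \<longlonglongrightarrow> 0"
      by (simp only: em) simp
  qed
next
  case False
  show ?thesis unfolding tip_def
  proof (intro allI impI)
    fix e :: real assume e: "0 < e"
    have eq: "{\<omega>\<in>space M. e < norm (c * f m \<omega> - c * g \<omega>)} = {\<omega>\<in>space M. e / norm c < norm (f m \<omega> - g \<omega>)}" for m
    proof -
      have "norm (c * f m \<omega> - c * g \<omega>) = norm c * norm (f m \<omega> - g \<omega>)" for \<omega>
        by (simp add: norm_mult flip: right_diff_distrib)
      moreover have "e < norm c * x \<longleftrightarrow> e / norm c < x" for x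
        using False by (simp add: pos_divide_less_eq mult.commute)
      ultimately show ?thesis by presburger
    qed
    have "e / norm c > 0" using e False by simp
    then have "(\<lambda>m. measure M {\<omega>\<in>space M. e / norm c < norm (f m \<omega> - g \<omega>)}) \<longlonglongrightarrow> 0"
      using assms unfolding tip_def by blast
    then show "(\<lambda>m. measure M {\<omega>\<in>space M. e < norm (c * f m \<omega> - c * g \<omega>)}) \<longlonglongrightarrow> 0"
      unfolding eq .
  qed
qed

lemma tip_cong:
  assumes "tip M f g" "\<And>m \<omega>. \<omega> \<in> space M \<Longrightarrow> f m \<omega> = f' m \<omega>" "\<And>\<omega>. \<omega> \<in> space M \<Longrightarrow> g \<omega> = g' \<omega>"
  shows "tip M f' g'"
proof -
  have "{\<omega>\<in>space M. e < norm (f m \<omega> - g \<omega>)} = {\<omega>\<in>space M. e < norm (f' m \<omega> - g' \<omega>)}" for e m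
    using assms(2,3) by auto
  then show ?thesis using assms(1) unfolding tip_def by simp
qed


lemma tip_unique_const:
  assumes fm: "finite_measure M"
    and [measurable]: "\<Phi> \<in> borel_measurable M" "G \<in> borel_measurable M"
    and t: "tip M (\<lambda>m. \<Phi>) G"
  shows "AE \<omega> in M. \<Phi> \<omega> = G \<omega>"
proof -
  have z: "measure M {\<omega>\<in>space M. e < norm (\<Phi> \<omega> - G \<omega>)} = 0" if "e > 0" for e
  proof -
    have "(\<lambda>m. measure M {\<omega>\<in>space M. e < norm (\<Phi> \<omega> - G \<omega>)}) \<longlonglongrightarrow> 0"
      using t that unfolding tip_def by blast
    then show ?thesis by (rule LIMSEQ_const_iff[THEN iffD1])
  qed
  have "AE \<omega> in M. \<not> (1 / real (Suc n) < norm (\<Phi> \<omega> - G \<omega>))" for n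
  proof (rule AE_I')
    show "{\<omega>\<in>space M. 1 / real (Suc n) < norm (\<Phi> \<omega> - G \<omega>)} \<in> null_sets M"
    proof -
      let ?S = "{\<omega>\<in>space M. 1 / real (Suc n) < norm (\<Phi> \<omega> - G \<omega>)}"
      have S: "?S \<in> sets M" by measurable
      have "measure M ?S = 0" by (rule z) simp
      then have "emeasure M ?S = 0" using finite_measure.emeasure_eq_measure[OF fm, of ?S] by simp
      with S show ?thesis by (simp add: null_sets_def)
    qed
  qed blast
  then have "AE \<omega> in M. \<forall>n. \<not> (1 / real (Suc n) < norm (\<Phi> \<omega> - G \<omega>))"
    by (rule AE_all_countable[THEN iffD2, rule_format])
  then show ?thesis
  proof (rule AE_mp, intro AE_I2 impI)
    fix \<omega> assume h: "\<forall>n. \<not> (1 / real (Suc n) < norm (\<Phi> \<omega> - G \<omega>))"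
    show "\<Phi> \<omega> = G \<omega>"
    proof (rule ccontr)
      assume "\<Phi> \<omega> \<noteq> G \<omega>"
      then have "0 < norm (\<Phi> \<omega> - G \<omega>)" by simp
      then obtain n where "1 / real (Suc n) < norm (\<Phi> \<omega> - G \<omega>)"
        by (rule nat_approx_posE)
      with h show False by blast
    qed
  qed
qed


lemma tip_bound:
  assumes fm: "finite_measure M" and [measurable]: "\<And>m. R m \<in> borel_measurable M"
    and B: "\<And>m. integrable M (B m)"
    and RB: "\<And>m \<omega>. \<omega> \<in> space M \<Longrightarrow> norm (R m \<omega>) \<le> B m \<omega>"
    and lim: "(\<lambda>m. integral\<^sup>L M (B m)) \<longlonglongrightarrow> 0"
  shows "tip M R (\<lambda>_. 0)"
  unfolding tip_def
proof (intro allI impI)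
  fix e :: real assume e: "0 < e"
  have [measurable]: "B m \<in> borel_measurable M" for m using B by auto
  show "(\<lambda>m. measure M {\<omega>\<in>space M. e < norm (R m \<omega> - 0)}) \<longlonglongrightarrow> 0"
  proof (rule tendsto_sandwich[of "\<lambda>_. 0" _ _ "\<lambda>m. integral\<^sup>L M (B m) / e"])
    show "\<forall>\<^sub>F n in sequentially. measure M {\<omega>\<in>space M. e < norm (R n \<omega> - 0)} \<le> integral\<^sup>L M (B n) / e"
    proof (intro always_eventually allI)
      fix n
      have "measure M {\<omega>\<in>space M. e < norm (R n \<omega> - 0)} \<le> measure M {\<omega>\<in>space M. B n \<omega> \<ge> e}"
      proof (rule finite_measure.finite_measure_mono[OF fm])
        show "{\<omega>\<in>space M. B n \<omega> \<ge> e} \<in> sets M" by measurable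
        show "{\<omega>\<in>space M. e < norm (R n \<omega> - 0)} \<subseteq> {\<omega>\<in>space M. B n \<omega> \<ge> e}"
          using RB by (auto intro: less_imp_le less_le_trans)
      qed
      also have "\<dots> \<le> integral\<^sup>L M (B n) / e"
        by (rule integral_Markov_inequality_measure) (use B RB e in \<open>auto intro!: AE_I2 order_trans[OF norm_ge_zero]\<close>)
      finally show "measure M {\<omega>\<in>space M. e < norm (R n \<omega> - 0)} \<le> integral\<^sup>L M (B n) / e" .
    qed
    show "(\<lambda>m. integral\<^sup>L M (B m) / e) \<longlonglongrightarrow> 0" using tendsto_divide[OF lim tendsto_const, of e] e by simp
  qed auto
qed


lemma tip_pointwise:
  assumes fm: "finite_measure M"
    and [measurable]: "\<And>m. f m \<in> borel_measurable M" "g \<in> borel_measurable M"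
    and lim: "\<And>\<omega>. \<omega> \<in> space M \<Longrightarrow> (\<lambda>m. f m \<omega>) \<longlonglongrightarrow> g \<omega>"
  shows "tip M f g"
  unfolding tip_def
proof (intro allI impI)
  fix e :: real assume e: "0 < e"
  let ?A = "\<lambda>m. {\<omega>\<in>space M. e < norm (f m \<omega> - g \<omega>)}"
  have "(\<lambda>m. integral\<^sup>L M (indicator (?A m) :: 'a \<Rightarrow> real)) \<longlonglongrightarrow> integral\<^sup>L M (\<lambda>_. 0::real)"
  proof (rule integral_dominated_convergence[where w="\<lambda>_. 1"])
    show "integrable M (\<lambda>_. 1::real)" using fm by (simp add: finite_measure.integrable_const)
    show "AE x in M. (\<lambda>i. indicator (?A i) x :: real) \<longlonglongrightarrow> 0"
    proof (rule AE_I2)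
      fix x assume x: "x \<in> space M"
      have "(\<lambda>m. f m x - g x) \<longlonglongrightarrow> 0" using lim[OF x] by (simp add: LIM_zero)
      then have "\<forall>\<^sub>F m in sequentially. norm (f m x - g x) < e"
        using e by (auto simp: tendsto_iff dist_norm)
      then have "\<forall>\<^sub>F m in sequentially. (indicator (?A m) x :: real) = 0"
        by eventually_elim (auto simp: indicator_def)
      then show "(\<lambda>i. indicator (?A i) x :: real) \<longlonglongrightarrow> 0"
        by (rule tendsto_eventually)
    qed
  qed (auto simp: indicator_def)
  moreover have "integral\<^sup>L M (indicator (?A m) :: 'a \<Rightarrow> real) = measure M (?A m)" for m
    by (simp add: Int_absorb2)
  ultimately show "(\<lambda>m. measure M (?A m)) \<longlonglongrightarrow> 0" by simp
qed



lemma integral_split_uniform: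
  fixes \<phi> :: "real \<Rightarrow> complex" and t :: real and N :: nat
  assumes t: "t > 0" and N: "N > 0" and cont: "continuous_on {0..t} \<phi>"
  shows "n \<le> N \<Longrightarrow> integral {0..real n * t / real N} \<phi>
          = (\<Sum>k<n. integral {real k * t / real N..real (Suc k) * t / real N} \<phi>)"
proof (induction n)
  case 0 then show ?case by simp
next
  case (Suc n)
  let ?\<tau> = "\<lambda>k::nat. real k * t / real N"
  have le1: "?\<tau> n \<le> ?\<tau> (Suc n)" using t N by (simp add: divide_right_mono)
  have le0: "0 \<le> ?\<tau> n" using t N by simp
  have "real (Suc n) * t \<le> real N * t" using Suc.prems t by (intro mult_right_mono) auto
  then have leT: "?\<tau> (Suc n) \<le> t" using N by (simp add: pos_divide_le_eq mult.commute del: of_nat_Suc)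
  have int: "\<phi> integrable_on {0..?\<tau> (Suc n)}"
    by (rule integrable_on_subinterval[OF integrable_continuous_interval[OF cont]]) (use leT in auto)
  have "integral {0..?\<tau> (Suc n)} \<phi> = integral {0..?\<tau> n} \<phi> + integral {?\<tau> n..?\<tau> (Suc n)} \<phi>"
    using Henstock_Kurzweil_Integration.integral_combine[OF le0 le1 int] by simp
  with Suc show ?case by simp
qed

lemma trap_riemann:
  fixes \<phi> :: "real \<Rightarrow> complex" and t :: real
  assumes t: "t > 0" and cont: "continuous_on {0..t} \<phi>"
  shows "(\<lambda>m. \<Sum>k<Suc m. (\<phi> (real k * t / real (Suc m)) + \<phi> (real (Suc k) * t / real (Suc m))) / 2
                * complex_of_real (t / real (Suc m))) \<longlonglongrightarrow> integral {0..t} \<phi>"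
proof (rule LIMSEQ_I)
  fix r :: real assume r: "r > 0"
  define \<epsilon> where "\<epsilon> = r / (2 * t)"
  have \<epsilon>: "\<epsilon> > 0" using r t by (simp add: \<epsilon>_def)
  have uc: "uniformly_continuous_on {0..t} \<phi>"
    by (rule compact_uniformly_continuous[OF cont]) simp
  obtain d where d: "d > 0" and dd: "\<And>x x'. x \<in> {0..t} \<Longrightarrow> x' \<in> {0..t} \<Longrightarrow> dist x' x < d \<Longrightarrow> dist (\<phi> x') (\<phi> x) < \<epsilon>"
    using uc \<epsilon> unfolding uniformly_continuous_on_def by metis
  obtain M0 :: nat where M0: "t / d < real M0" using reals_Archimedean2 by blast
  show "\<exists>no. \<forall>m\<ge>no. norm ((\<Sum>k<Suc m. (\<phi> (real k * t / real (Suc m)) + \<phi> (real (Suc k) * t / real (Suc m))) / 2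
                * complex_of_real (t / real (Suc m))) - integral {0..t} \<phi>) < r"
  proof (intro exI allI impI)
    fix m assume m: "M0 \<le> m"
    define N where "N = Suc m"
    define h where "h = t / real N"
    let ?\<tau> = "\<lambda>k::nat. real k * t / real N"
    have N0: "N > 0" unfolding N_def by simp
    have h: "h > 0" using t N0 by (simp add: h_def)
    have hd: "h < d"
    proof -
      have "t / d < real N" using M0 m unfolding N_def by linarith
      then have "t < real N * d" using d by (simp add: field_simps)
      then show ?thesis unfolding h_def using N0 by (simp add: field_simps)
    qed
    have \<tau>eq: "?\<tau> k = real k * h" for k unfolding h_def by simp
    have split: "integral {0..t} \<phi> = (\<Sum>k<N. integral {?\<tau> k..?\<tau> (Suc k)} \<phi>)"
      using integral_split_uniform[OF t N0 cont, of N] N0 by simp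
    have piece: "norm (integral {?\<tau> k..?\<tau> (Suc k)} \<phi> - (\<phi> (?\<tau> k) + \<phi> (?\<tau> (Suc k))) / 2 * complex_of_real h)
                 \<le> \<epsilon> * h" if k: "k < N" for k
    proof -
      let ?a = "?\<tau> k" and ?b = "?\<tau> (Suc k)" and ?c = "(\<phi> (?\<tau> k) + \<phi> (?\<tau> (Suc k))) / 2"
      have ab: "?b - ?a = h" unfolding \<tau>eq by (simp add: algebra_simps)
      have a0: "0 \<le> ?a" using t N0 by simp
      have "real (Suc k) * t \<le> real N * t" using k t by (intro mult_right_mono) auto
      then have bt: "?b \<le> t" using N0 by (simp add: pos_divide_le_eq mult.commute del: of_nat_Suc)
      have sub: "{?a..?b} \<subseteq> {0..t}" using a0 bt by auto
      have int: "\<phi> integrable_on {?a..?b}"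
        by (rule integrable_on_subinterval[OF integrable_continuous_interval[OF cont] sub])
      have hi: "((\<lambda>s. \<phi> s - ?c) has_integral (integral {?a..?b} \<phi> - Henstock_Kurzweil_Integration.content {?a..?b} *\<^sub>R ?c)) {?a..?b}"
        by (intro has_integral_diff integrable_integral int has_integral_const_real)
      have cont_ab: "Henstock_Kurzweil_Integration.content {?a..?b} = h" using ab h by simp
      have bnd: "norm (\<phi> s - ?c) \<le> \<epsilon>" if s: "s \<in> cbox ?a ?b" for s
      proof -
        have s': "s \<in> {?a..?b}" using s by simp
        have "dist (\<phi> s) (\<phi> ?a) < \<epsilon>"
          by (rule dd) (use s' sub ab hd in \<open>auto simp: dist_real_def\<close>)
        moreover have "dist (\<phi> s) (\<phi> ?b) < \<epsilon>"
          by (rule dd) (use s' sub ab hd in \<open>auto simp: dist_real_def\<close>)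
        moreover have eq: "\<phi> s - ?c = ((\<phi> s - \<phi> ?a) + (\<phi> s - \<phi> ?b)) / 2" by (simp add: field_simps)
        moreover have "norm ((\<phi> s - \<phi> ?a) + (\<phi> s - \<phi> ?b)) \<le> norm (\<phi> s - \<phi> ?a) + norm (\<phi> s - \<phi> ?b)"
          by (rule norm_triangle_ineq)
        moreover have "norm (\<phi> s - ?c) = norm ((\<phi> s - \<phi> ?a) + (\<phi> s - \<phi> ?b)) / 2"
          unfolding eq norm_divide by simp
        ultimately show ?thesis unfolding dist_norm by linarith
      qed
      have "norm (integral {?a..?b} \<phi> - Henstock_Kurzweil_Integration.content {?a..?b} *\<^sub>R ?c) \<le> \<epsilon> * Henstock_Kurzweil_Integration.content (cbox ?a ?b)"
        by (rule has_integral_bound[of \<epsilon> "\<lambda>s. \<phi> s - ?c"]) (use \<epsilon> hi bnd in auto)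
      then show ?thesis using cont_ab by (simp add: scaleR_conv_of_real mult.commute)
    qed
    have "norm ((\<Sum>k<N. (\<phi> (?\<tau> k) + \<phi> (?\<tau> (Suc k))) / 2 * complex_of_real h) - integral {0..t} \<phi>)
          = norm (\<Sum>k<N. integral {?\<tau> k..?\<tau> (Suc k)} \<phi> - (\<phi> (?\<tau> k) + \<phi> (?\<tau> (Suc k))) / 2 * complex_of_real h)"
      unfolding split by (simp add: sum_subtractf norm_minus_commute)
    also have "\<dots> \<le> (\<Sum>k<N. norm (integral {?\<tau> k..?\<tau> (Suc k)} \<phi> - (\<phi> (?\<tau> k) + \<phi> (?\<tau> (Suc k))) / 2 * complex_of_real h))"
      by (rule norm_sum)
    also have "\<dots> \<le> (\<Sum>k<N. \<epsilon> * h)"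
      by (rule sum_mono) (use piece in auto)
    also have "\<dots> = \<epsilon> * t" using N0 by (simp add: h_def)
    also have "\<dots> < r" using r t by (simp add: \<epsilon>_def)
    finally show "norm ((\<Sum>k<Suc m. (\<phi> (real k * t / real (Suc m)) + \<phi> (real (Suc k) * t / real (Suc m))) / 2
                * complex_of_real (t / real (Suc m))) - integral {0..t} \<phi>) < r"
      unfolding N_def h_def by simp
  qed
qed


lemma disp_finite:
  fixes \<alpha> \<beta> :: complex and d :: real
  defines "F \<equiv> \<lambda>z::complex. z^2 + \<alpha> * exp (- (\<i> * z * of_real d)) + \<beta> * exp (\<i> * z * of_real d)"
  shows "finite {K::real. F (of_real K) = 0}"
proof -
  define R where "R = sqrt (norm \<alpha> + norm \<beta>) + 1"
  have Rpos: "R > 0" unfolding R_def by (simp add: add_nonneg_pos)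
  have nexp: "norm (exp (\<i> * of_real y)) = 1" for y :: real by simp
  have cbound: "norm (\<alpha> * exp (- (\<i> * of_real K * of_real d)) + \<beta> * exp (\<i> * of_real K * of_real d)) \<le> norm \<alpha> + norm \<beta>" for K :: real
  proof -
    have e1: "norm (exp (- (\<i> * of_real K * of_real d))) = 1"
      using nexp[of "- (K*d)"] by (simp add: algebra_simps)
    have e2: "norm (exp (\<i> * of_real K * of_real d)) = 1"
      using nexp[of "K*d"] by (simp add: algebra_simps)
    have "norm (\<alpha> * exp (- (\<i> * of_real K * of_real d)) + \<beta> * exp (\<i> * of_real K * of_real d))
        \<le> norm (\<alpha> * exp (- (\<i> * of_real K * of_real d))) + norm (\<beta> * exp (\<i> * of_real K * of_real d))"
      by (rule norm_triangle_ineq)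
    also have "\<dots> = norm \<alpha> + norm \<beta>" by (simp add: norm_mult e1 e2)
    finally show ?thesis .
  qed
  have Rsq: "norm \<alpha> + norm \<beta> < R^2"
  proof -
    let ?s = "sqrt (norm \<alpha> + norm \<beta>)"
    have "?s^2 = norm \<alpha> + norm \<beta>" by simp
    moreover have "?s^2 < (?s + 1)^2" by (simp add: power2_eq_square algebra_simps add_pos_nonneg)
    ultimately show ?thesis unfolding R_def by simp
  qed
  have realbound: "\<bar>K\<bar> \<le> R" if "F (of_real K) = 0" for K :: real
  proof -
    have "of_real (K^2) = - (\<alpha> * exp (- (\<i> * of_real K * of_real d)) + \<beta> * exp (\<i> * of_real K * of_real d))"
      using that unfolding F_def by (simp add: algebra_simps eq_neg_iff_add_eq_0)
    then have "norm (of_real (K^2) :: complex) \<le> norm \<alpha> + norm \<beta>"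
      using cbound[of K] by (simp only: norm_minus_cancel)
    then have "K^2 < R^2" using Rsq by (simp add: norm_power)
    then show ?thesis using Rpos by (simp add: abs_le_square_iff less_imp_le power2_less_imp_less)
  qed
  define Z where "Z = {z. F z = 0} \<inter> cball 0 R"
  have FR: "F (of_real R) \<noteq> 0"
  proof
    assume h: "F (of_real R) = 0"
    have "\<bar>R\<bar> \<le> R" using Rpos by simp
    from realbound[OF h] have "R^2 \<le> norm \<alpha> + norm \<beta>"
    proof -
      have "of_real (R^2) = - (\<alpha> * exp (- (\<i> * of_real R * of_real d)) + \<beta> * exp (\<i> * of_real R * of_real d))"
        using h unfolding F_def by (simp add: algebra_simps eq_neg_iff_add_eq_0)
      then have "norm (of_real (R^2) :: complex) \<le> norm \<alpha> + norm \<beta>"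
        using cbound[of R] by (simp only: norm_minus_cancel)
      then show ?thesis by (simp add: norm_power)
    qed
    with Rsq show False by simp
  qed
  have finZ: "finite Z"
  proof (rule ccontr)
    assume inf: "infinite Z"
    obtain \<xi> where "\<xi> \<in> cball 0 R" "\<xi> islimpt Z"
      using Heine_Borel_imp_Bolzano_Weierstrass[of "cball 0 R" Z] inf unfolding Z_def by auto
    have hol: "F holomorphic_on UNIV" unfolding F_def by (intro holomorphic_intros)
    have "F (of_real R) = 0"
      by (rule analytic_continuation[OF hol, of Z \<xi>]) (use \<open>\<xi> islimpt Z\<close> in \<open>auto simp: Z_def\<close>)
    with FR show False by simp
  qed
  have "{K::real. F (of_real K) = 0} \<subseteq> of_real -` Z"
    using realbound unfolding Z_def by (auto simp: dist_norm)
  moreover have "finite (of_real -` Z :: real set)"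
    by (rule finite_vimageI[OF finZ]) (simp add: inj_def)
  ultimately show ?thesis by (rule finite_subset)
qed


lemma sb_facts:
  assumes "std_brownian M W"
  shows "prob_space M" "\<And>t. W t \<in> borel_measurable M" "\<And>\<omega>. \<omega> \<in> space M \<Longrightarrow> W 0 \<omega> = 0"
    "\<And>\<omega>. \<omega> \<in> space M \<Longrightarrow> continuous_on {0..} (\<lambda>t. W t \<omega>)"
    "\<And>s t. 0 \<le> s \<Longrightarrow> s < t \<Longrightarrow> distributed M lborel (\<lambda>\<omega>. W t \<omega> - W s \<omega>) (\<lambda>x. ennreal (normal_density 0 (sqrt (t - s)) x))"
  using assms unfolding std_brownian_def by auto

lemma cube_moment:
  assumes SB: "std_brownian M W" and st: "0 \<le> s" "s < t"
  shows "integrable M (\<lambda>\<omega>. \<bar>W t \<omega> - W s \<omega>\<bar>^3)"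
    and "(\<integral>\<omega>. \<bar>W t \<omega> - W s \<omega>\<bar>^3 \<partial>M) = 2 * sqrt (t - s)^3 * sqrt (2 / pi)"
proof -
  have D: "distributed M lborel (\<lambda>\<omega>. W t \<omega> - W s \<omega>) (\<lambda>x. ennreal (normal_density 0 (sqrt (t - s)) x))"
    using sb_facts(5)[OF SB st] .
  have sp: "0 < sqrt (t - s)" using st by simp
  have HB: "has_bochner_integral lborel (\<lambda>x. normal_density 0 (sqrt (t - s)) x * \<bar>x\<bar>^3)
        (2 * sqrt (t - s)^3 * sqrt (2 / pi))"
    using normal_moment_abs_odd[OF sp, of 0 1] by (simp add: numeral_eq_Suc)
  have "integrable lborel (\<lambda>x. normal_density 0 (sqrt (t - s)) x * \<bar>x\<bar>^3)"
    using HB by (rule integrable.intros)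
  then show "integrable M (\<lambda>\<omega>. \<bar>W t \<omega> - W s \<omega>\<bar>^3)"
    using distributed_integrable[OF D, of "\<lambda>x. \<bar>x\<bar>^3"] by simp
  have "(\<integral>x. normal_density 0 (sqrt (t - s)) x * \<bar>x\<bar>^3 \<partial>lborel) = (\<integral>\<omega>. \<bar>W t \<omega> - W s \<omega>\<bar>^3 \<partial>M)"
    using distributed_integral[OF D, of "\<lambda>x. \<bar>x\<bar>^3"] by simp
  then show "(\<integral>\<omega>. \<bar>W t \<omega> - W s \<omega>\<bar>^3 \<partial>M) = 2 * sqrt (t - s)^3 * sqrt (2 / pi)"
    using has_bochner_integral_integral_eq[OF HB] by simp
qed

lemma cube_sum_le:
  fixes x y :: real assumes "0 \<le> x" "0 \<le> y"
  shows "(x + y)^3 \<le> 4 * (x^3 + y^3)"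
proof -
  have h: "0 \<le> (x + y) * (x - y)^2" using assms by simp
  have "4 * (x^3 + y^3) - (x + y)^3 = 3 * ((x + y) * (x - y)^2)"
    by (simp add: power3_eq_cube power2_eq_square algebra_simps)
  with h show ?thesis by linarith
qed


definition Eph :: "real \<Rightarrow> real \<Rightarrow> (real \<Rightarrow> 'a \<Rightarrow> real) \<Rightarrow> real \<Rightarrow> 'a \<Rightarrow> complex" where
  "Eph a b W s \<omega> = exp (\<i> * complex_of_real (a * s + b * W s \<omega>))"

definition tau :: "real \<Rightarrow> nat \<Rightarrow> nat \<Rightarrow> real" where
  "tau t m k = real k * t / real (Suc m)"

lemma tau_simps:
  shows "tau t m 0 = 0" "tau t m (Suc m) = t" "tau t m (Suc k) - tau t m k = t / real (Suc m)"
proof -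
  show "tau t m 0 = 0" unfolding tau_def by simp
  show "tau t m (Suc m) = t" unfolding tau_def by (metis nonzero_mult_div_cancel_left of_nat_eq_0_iff nat.distinct(1))
  have "real (Suc k) * t - real k * t = t" by (simp add: algebra_simps)
  then show "tau t m (Suc k) - tau t m k = t / real (Suc m)" unfolding tau_def
    by (metis diff_divide_distrib)
qed

lemma tau_mono: "t > 0 \<Longrightarrow> tau t m k < tau t m (Suc k)" "t > 0 \<Longrightarrow> 0 \<le> tau t m k"
  unfolding tau_def by (simp_all add: divide_strict_right_mono)

lemma limit_aux:
  fixes c1 c2 t :: real assumes t: "t > 0"
  shows "(\<lambda>m. real (Suc m) * (c1 * (t / real (Suc m))^3 + c2 * sqrt (t / real (Suc m))^3)) \<longlonglongrightarrow> 0"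
proof -
  define x where "x m = inverse (real (Suc m))" for m
  have x0: "x \<longlonglongrightarrow> 0" unfolding x_def by (rule LIMSEQ_inverse_real_of_nat)
  have eq: "real (Suc m) * (c1 * (t / real (Suc m))^3 + c2 * sqrt (t / real (Suc m))^3)
        = c1 * t^3 * (x m)^2 + c2 * t * sqrt t * sqrt (x m)" for m
  proof -
    have s: "sqrt (t / real (Suc m)) = sqrt t * sqrt (x m)"
      unfolding x_def by (simp add: real_sqrt_mult[symmetric] divide_inverse)
    have sx: "sqrt (x m) * sqrt (x m) = x m" unfolding x_def by simp
    have "sqrt (t / real (Suc m))^3 = (sqrt t * sqrt t) * sqrt t * (sqrt (x m) * sqrt (x m)) * sqrt (x m)"
      unfolding s by (simp add: power3_eq_cube algebra_simps)
    also have "\<dots> = t * sqrt t * x m * sqrt (x m)" using t sx by simp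
    finally have c: "sqrt (t / real (Suc m))^3 = t * sqrt t * x m * sqrt (x m)" .
    have xm: "real (Suc m) * x m = 1" unfolding x_def by simp
    have e1: "real (Suc m) * (c1 * (t / real (Suc m))^3) = c1 * t^3 * (x m)^2"
      unfolding x_def by (simp add: power3_eq_cube power2_eq_square field_simps del: of_nat_Suc)
    have "real (Suc m) * (c2 * sqrt (t / real (Suc m))^3) = c2 * t * sqrt t * sqrt (x m) * (real (Suc m) * x m)"
      unfolding c by (simp add: algebra_simps)
    then have e2: "real (Suc m) * (c2 * sqrt (t / real (Suc m))^3) = c2 * t * sqrt t * sqrt (x m)"
      unfolding xm by simp
    show ?thesis unfolding distrib_left e1 e2 ..
  qed
  have "(\<lambda>m. c1 * t^3 * (x m)^2 + c2 * t * sqrt t * sqrt (x m)) \<longlonglongrightarrow> c1 * t^3 * 0^2 + c2 * t * sqrt t * sqrt 0"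
    by (intro tendsto_intros x0)
  then show ?thesis unfolding eq by simp
qed


lemma gen_limit:
  fixes M :: "'a measure" and W :: "real \<Rightarrow> 'a \<Rightarrow> real" and a b t :: real and I :: "'a \<Rightarrow> complex"
  assumes SB: "std_brownian M W" and t: "t > 0" and Im[measurable]: "I \<in> borel_measurable M"
    and tipS: "tip M (\<lambda>m \<omega>. \<Sum>k<Suc m. (Eph a b W (tau t m k) \<omega> + Eph a b W (tau t m (Suc k)) \<omega>) / 2
                  * complex_of_real (W (tau t m (Suc k)) \<omega> - W (tau t m k) \<omega>)) I"
  shows "AE \<omega> in M. Eph a b W t \<omega> - 1
           = \<i> * complex_of_real a * integral {0..t} (\<lambda>s. Eph a b W s \<omega>) + \<i> * complex_of_real b * I \<omega>"
proof -
  note facts = sb_facts[OF SB]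
  interpret prob_space M by (rule facts(1))
  have fm: "finite_measure M" by unfold_locales
  have Wm[measurable]: "\<And>s. W s \<in> borel_measurable M" by (rule facts(2))
  have Ephm[measurable]: "(\<lambda>\<omega>. Eph a b W s \<omega>) \<in> borel_measurable M" for s
    unfolding Eph_def by measurable
  define h where "h m = t / real (Suc m)" for m :: nat
  define S where "S m \<omega> = (\<Sum>k<Suc m. (Eph a b W (tau t m k) \<omega> + Eph a b W (tau t m (Suc k)) \<omega>) / 2
                  * complex_of_real (W (tau t m (Suc k)) \<omega> - W (tau t m k) \<omega>))" for m \<omega>
  define T where "T m \<omega> = (\<Sum>k<Suc m. (Eph a b W (tau t m k) \<omega> + Eph a b W (tau t m (Suc k)) \<omega>) / 2
                  * complex_of_real (h m))" for m \<omega>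
  define P where "P m k \<omega> = a * tau t m k + b * W (tau t m k) \<omega>" for m k \<omega>
  define r where "r m k \<omega> = exp (\<i> * of_real (P m (Suc k) \<omega>)) - exp (\<i> * of_real (P m k \<omega>))
        - \<i> * of_real (P m (Suc k) \<omega> - P m k \<omega>) * (exp (\<i> * of_real (P m k \<omega>)) + exp (\<i> * of_real (P m (Suc k) \<omega>))) / 2" for m k \<omega>
  define R where "R m \<omega> = (\<Sum>k<Suc m. r m k \<omega>)" for m \<omega>
  define L where "L \<omega> = integral {0..t} (\<lambda>s. Eph a b W s \<omega>)" for \<omega>
  define B where "B m \<omega> = (\<Sum>k<Suc m. 4 * (\<bar>a\<bar>^3 * h m ^ 3) + 4 * (\<bar>b\<bar>^3 * \<bar>W (tau t m (Suc k)) \<omega> - W (tau t m k) \<omega>\<bar>^3))" for m \<omega>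
  have EP: "Eph a b W (tau t m k) \<omega> = exp (\<i> * of_real (P m k \<omega>))" for m k \<omega>
    unfolding Eph_def P_def ..
  have Sm[measurable]: "S m \<in> borel_measurable M" for m unfolding S_def by measurable
  have Tm[measurable]: "T m \<in> borel_measurable M" for m unfolding T_def by measurable
  have Rm[measurable]: "R m \<in> borel_measurable M" for m unfolding R_def r_def P_def by measurable
  have ident: "Eph a b W t \<omega> - 1 = \<i> * of_real a * T m \<omega> + \<i> * of_real b * S m \<omega> + R m \<omega>"
    if \<omega>: "\<omega> \<in> space M" for m \<omega>
  proof -
    let ?e = "\<lambda>k. exp (\<i> * of_real (P m k \<omega>))"
    have tele: "(\<Sum>k<Suc m. ?e (Suc k) - ?e k) = ?e (Suc m) - ?e 0"
      by (rule sum_lessThan_telescope)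
    have e0: "?e 0 = 1" using facts(3)[OF \<omega>] by (simp add: P_def tau_simps)
    have em: "?e (Suc m) = Eph a b W t \<omega>" by (simp add: P_def tau_simps Eph_def)
    have dP: "P m (Suc k) \<omega> - P m k \<omega> = a * h m + b * (W (tau t m (Suc k)) \<omega> - W (tau t m k) \<omega>)" for k
    proof -
      have "P m (Suc k) \<omega> - P m k \<omega> = a * (tau t m (Suc k) - tau t m k) + b * (W (tau t m (Suc k)) \<omega> - W (tau t m k) \<omega>)"
        unfolding P_def by (simp add: algebra_simps)
      then show ?thesis unfolding tau_simps h_def .
    qed
    have piece: "\<i> * of_real (P m (Suc k) \<omega> - P m k \<omega>) * (?e k + ?e (Suc k)) / 2
         = \<i> * of_real a * ((?e k + ?e (Suc k)) / 2 * of_real (h m))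
           + \<i> * of_real b * ((?e k + ?e (Suc k)) / 2 * of_real (W (tau t m (Suc k)) \<omega> - W (tau t m k) \<omega>))" for k
      unfolding dP of_real_add of_real_mult of_real_diff by (simp add: field_simps)
    have "R m \<omega> = (\<Sum>k<Suc m. ?e (Suc k) - ?e k) - (\<Sum>k<Suc m. \<i> * of_real (P m (Suc k) \<omega> - P m k \<omega>) * (?e k + ?e (Suc k)) / 2)"
      unfolding R_def r_def by (simp add: sum_subtractf)
    also have "(\<Sum>k<Suc m. \<i> * of_real (P m (Suc k) \<omega> - P m k \<omega>) * (?e k + ?e (Suc k)) / 2)
        = \<i> * of_real a * T m \<omega> + \<i> * of_real b * S m \<omega>"
      unfolding piece sum.distrib T_def S_def EP sum_distrib_left ..
    finally show ?thesis unfolding tele e0 em by simp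
  qed
  have contE: "continuous_on {0..t} (\<lambda>s. Eph a b W s \<omega>)" if \<omega>: "\<omega> \<in> space M" for \<omega>
  proof -
    have "continuous_on {0..t} (\<lambda>s. W s \<omega>)"
      by (rule continuous_on_subset[OF facts(4)[OF \<omega>]]) auto
    then show ?thesis unfolding Eph_def by (intro continuous_intros)
  qed
  have Tlim: "(\<lambda>m. T m \<omega>) \<longlonglongrightarrow> L \<omega>" if \<omega>: "\<omega> \<in> space M" for \<omega>
    using trap_riemann[OF t contE[OF \<omega>]] unfolding T_def L_def h_def tau_def .
  have Lm[measurable]: "L \<in> borel_measurable M"
    by (rule borel_measurable_LIMSEQ_metric[OF Tm Tlim])
  have tipT: "tip M T L" by (rule tip_pointwise[OF fm Tm Lm Tlim])
  have incr: "0 \<le> tau t m k" "tau t m k < tau t m (Suc k)" for m k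
    using tau_mono[OF t] by auto
  have intcube: "integrable M (\<lambda>\<omega>. \<bar>W (tau t m (Suc k)) \<omega> - W (tau t m k) \<omega>\<bar>^3)" for m k
    using cube_moment(1)[OF SB incr] .
  have Bint: "integrable M (B m)" for m
    unfolding B_def by (intro Bochner_Integration.integrable_sum Bochner_Integration.integrable_add
        integrable_const integrable_mult_right intcube)
  have hpos: "h m > 0" for m using t by (simp add: h_def)
  have RB: "norm (R m \<omega>) \<le> B m \<omega>" if \<omega>: "\<omega> \<in> space M" for m \<omega>
  proof -
    have "norm (R m \<omega>) \<le> (\<Sum>k<Suc m. norm (r m k \<omega>))" unfolding R_def by (rule norm_sum)
    also have "\<dots> \<le> B m \<omega>" unfolding B_def
    proof (rule sum_mono)
      fix k
      let ?d = "W (tau t m (Suc k)) \<omega> - W (tau t m k) \<omega>"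
      have "norm (r m k \<omega>) \<le> \<bar>P m (Suc k) \<omega> - P m k \<omega>\<bar>^3"
        unfolding r_def by (rule trap_bound)
      also have "\<bar>P m (Suc k) \<omega> - P m k \<omega>\<bar> = \<bar>a * h m + b * ?d\<bar>"
      proof -
        have "P m (Suc k) \<omega> - P m k \<omega> = a * (tau t m (Suc k) - tau t m k) + b * ?d"
          unfolding P_def by (simp add: algebra_simps)
        then show ?thesis unfolding tau_simps h_def by simp
      qed
      also have "\<bar>a * h m + b * ?d\<bar>^3 \<le> (\<bar>a\<bar> * h m + \<bar>b\<bar> * \<bar>?d\<bar>)^3"
      proof (rule power_mono)
        show "\<bar>a * h m + b * ?d\<bar> \<le> \<bar>a\<bar> * h m + \<bar>b\<bar> * \<bar>?d\<bar>"
          using abs_triangle_ineq[of "a * h m" "b * ?d"] hpos[of m] by (simp add: abs_mult)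
      qed simp
      also have "\<dots> \<le> 4 * ((\<bar>a\<bar> * h m)^3 + (\<bar>b\<bar> * \<bar>?d\<bar>)^3)"
        by (rule cube_sum_le) (use hpos[of m] in auto)
      also have "\<dots> = 4 * (\<bar>a\<bar>^3 * h m ^ 3) + 4 * (\<bar>b\<bar>^3 * \<bar>?d\<bar>^3)"
        by (simp add: power_mult_distrib algebra_simps)
      finally show "norm (r m k \<omega>) \<le> 4 * (\<bar>a\<bar>^3 * h m ^ 3) + 4 * (\<bar>b\<bar>^3 * \<bar>?d\<bar>^3)" .
    qed
    finally show ?thesis .
  qed
  have Bintegral: "integral\<^sup>L M (B m) = real (Suc m) * ((4 * \<bar>a\<bar>^3) * (t / real (Suc m))^3
                      + (8 * \<bar>b\<bar>^3 * sqrt (2 / pi)) * sqrt (t / real (Suc m))^3)" for m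
  proof -
    have one: "integral\<^sup>L M (\<lambda>\<omega>. 4 * (\<bar>a\<bar>^3 * h m ^ 3) + 4 * (\<bar>b\<bar>^3 * \<bar>W (tau t m (Suc k)) \<omega> - W (tau t m k) \<omega>\<bar>^3))
        = (4 * \<bar>a\<bar>^3) * (t / real (Suc m))^3 + (8 * \<bar>b\<bar>^3 * sqrt (2 / pi)) * sqrt (t / real (Suc m))^3" for k
    proof -
      have "integral\<^sup>L M (\<lambda>\<omega>. 4 * (\<bar>a\<bar>^3 * h m ^ 3) + 4 * (\<bar>b\<bar>^3 * \<bar>W (tau t m (Suc k)) \<omega> - W (tau t m k) \<omega>\<bar>^3))
          = 4 * (\<bar>a\<bar>^3 * h m ^ 3) + 4 * (\<bar>b\<bar>^3 * integral\<^sup>L M (\<lambda>\<omega>. \<bar>W (tau t m (Suc k)) \<omega> - W (tau t m k) \<omega>\<bar>^3))"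
        using intcube[of m k] by (simp add: prob_space)
      also have "integral\<^sup>L M (\<lambda>\<omega>. \<bar>W (tau t m (Suc k)) \<omega> - W (tau t m k) \<omega>\<bar>^3) = 2 * sqrt (h m)^3 * sqrt (2 / pi)"
        using cube_moment(2)[OF SB incr, of m k] unfolding tau_simps h_def .
      finally show ?thesis unfolding h_def by (simp add: algebra_simps)
    qed
    have "integral\<^sup>L M (B m) = (\<Sum>k<Suc m. integral\<^sup>L M (\<lambda>\<omega>. 4 * (\<bar>a\<bar>^3 * h m ^ 3) + 4 * (\<bar>b\<bar>^3 * \<bar>W (tau t m (Suc k)) \<omega> - W (tau t m k) \<omega>\<bar>^3)))"
      unfolding B_def
      by (rule Bochner_Integration.integral_sum) (intro Bochner_Integration.integrable_add integrable_const integrable_mult_right intcube)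
    also have "\<dots> = real (Suc m) * ((4 * \<bar>a\<bar>^3) * (t / real (Suc m))^3
                      + (8 * \<bar>b\<bar>^3 * sqrt (2 / pi)) * sqrt (t / real (Suc m))^3)"
      unfolding one by simp
    finally show ?thesis .
  qed
  have tipR: "tip M R (\<lambda>_. 0)"
  proof (rule tip_bound[OF fm Rm Bint RB])
    show "(\<lambda>m. integral\<^sup>L M (B m)) \<longlonglongrightarrow> 0" unfolding Bintegral by (rule limit_aux[OF t])
  qed
  have tipS': "tip M S I" using tipS unfolding S_def .
  have c1: "tip M (\<lambda>m \<omega>. \<i> * of_real a * T m \<omega>) (\<lambda>\<omega>. \<i> * of_real a * L \<omega>)"
    by (rule tip_scale[OF tipT])
  have c2: "tip M (\<lambda>m \<omega>. \<i> * of_real b * S m \<omega>) (\<lambda>\<omega>. \<i> * of_real b * I \<omega>)"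
    by (rule tip_scale[OF tipS'])
  have c3: "tip M (\<lambda>m \<omega>. \<i> * of_real a * T m \<omega> + \<i> * of_real b * S m \<omega>) (\<lambda>\<omega>. \<i> * of_real a * L \<omega> + \<i> * of_real b * I \<omega>)"
    by (rule tip_add[OF fm _ _ _ _ c1 c2]) measurable
  have c4: "tip M (\<lambda>m \<omega>. (\<i> * of_real a * T m \<omega> + \<i> * of_real b * S m \<omega>) + R m \<omega>) (\<lambda>\<omega>. (\<i> * of_real a * L \<omega> + \<i> * of_real b * I \<omega>) + 0)"
    by (rule tip_add[OF fm _ _ _ _ c3 tipR]) measurable
  have c5: "tip M (\<lambda>m \<omega>. Eph a b W t \<omega> - 1) (\<lambda>\<omega>. \<i> * of_real a * L \<omega> + \<i> * of_real b * I \<omega>)"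
    by (rule tip_cong[OF c4]) (use ident in auto)
  have "AE \<omega> in M. Eph a b W t \<omega> - 1 = \<i> * of_real a * L \<omega> + \<i> * of_real b * I \<omega>"
    by (rule tip_unique_const[OF fm _ _ c5]) measurable
  then show ?thesis unfolding L_def .
qed


lemma strat_tip:
  assumes S: "strat_integral_is M W Y t I" and t: "t > 0"
  shows "tip M (\<lambda>m \<omega>. \<Sum>k<Suc m. (Y (tau t m k) \<omega> + Y (tau t m (Suc k)) \<omega>) / 2
                  * complex_of_real (W (tau t m (Suc k)) \<omega> - W (tau t m k) \<omega>)) I"
  unfolding tip_def
proof (intro allI impI LIMSEQ_I)
  fix e r :: real assume e: "0 < e" and r: "0 < r"
  obtain \<delta> where \<delta>: "\<delta> > 0" and H: "\<And>n \<tau>. \<tau> 0 = 0 \<and> \<tau> n = t \<and> (\<forall>k<n. \<tau> k < \<tau> (Suc k) \<and> \<tau> (Suc k) - \<tau> k < \<delta>) \<Longrightarrow>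
        measure M {\<omega>\<in>space M.
           norm ((\<Sum>k<n. (Y (\<tau> k) \<omega> + Y (\<tau> (Suc k)) \<omega>) / 2
                    * complex_of_real (W (\<tau> (Suc k)) \<omega> - W (\<tau> k) \<omega>)) - I \<omega>) > e} < r"
  proof -
    have "\<exists>\<delta>>0. \<forall>(n::nat) (\<tau>::nat \<Rightarrow> real).
        \<tau> 0 = 0 \<and> \<tau> n = t \<and> (\<forall>k<n. \<tau> k < \<tau> (Suc k) \<and> \<tau> (Suc k) - \<tau> k < \<delta>) \<longrightarrow>
        measure M {\<omega>\<in>space M.
           norm ((\<Sum>k<n. (Y (\<tau> k) \<omega> + Y (\<tau> (Suc k)) \<omega>) / 2
                    * complex_of_real (W (\<tau> (Suc k)) \<omega> - W (\<tau> k) \<omega>)) - I \<omega>) > e} < r"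
      using S[unfolded strat_integral_is_def, THEN conjunct2, rule_format, OF e r] .
    then show ?thesis using that by blast
  qed
  obtain M0 :: nat where M0: "t / \<delta> < real M0" using reals_Archimedean2 by blast
  show "\<exists>no. \<forall>m\<ge>no. norm (measure M {\<omega>\<in>space M. e < norm ((\<Sum>k<Suc m. (Y (tau t m k) \<omega> + Y (tau t m (Suc k)) \<omega>) / 2
                  * complex_of_real (W (tau t m (Suc k)) \<omega> - W (tau t m k) \<omega>)) - I \<omega>)} - 0) < r"
  proof (intro exI allI impI)
    fix m assume m: "M0 \<le> m"
    have hd: "t / real (Suc m) < \<delta>"
    proof -
      have "t / \<delta> < real (Suc m)" using M0 m by linarith
      then show ?thesis using \<delta> by (simp add: field_simps)
    qed
    have "measure M {\<omega>\<in>space M. e < norm ((\<Sum>k<Suc m. (Y (tau t m k) \<omega> + Y (tau t m (Suc k)) \<omega>) / 2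
                  * complex_of_real (W (tau t m (Suc k)) \<omega> - W (tau t m k) \<omega>)) - I \<omega>)} < r"
      by (rule H) (use tau_simps tau_mono[OF t] hd in auto)
    then show "norm (measure M {\<omega>\<in>space M. e < norm ((\<Sum>k<Suc m. (Y (tau t m k) \<omega> + Y (tau t m (Suc k)) \<omega>) / 2
                  * complex_of_real (W (tau t m (Suc k)) \<omega> - W (tau t m k) \<omega>)) - I \<omega>)} - 0) < r"
      by simp
  qed
qed



lemma small_integral_nonzero:
  fixes \<phi> :: "real \<Rightarrow> complex"
  assumes cont: "continuous_on {0..1} \<phi>" and p0: "\<phi> 0 = 1"
  shows "\<exists>n. integral {0..1 / real (Suc n)} \<phi> \<noteq> 0"
proof -
  have "\<forall>e>0. \<exists>d>0. \<forall>x'\<in>{0..1}. dist x' 0 < d \<longrightarrow> dist (\<phi> x') (\<phi> 0) < e"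
    by (rule bspec[OF cont[unfolded continuous_on_iff]]) simp
  then have "\<exists>d>0. \<forall>x'\<in>{0..1}. dist x' 0 < d \<longrightarrow> dist (\<phi> x') (\<phi> 0) < 1/2"
    by (rule allE[of _ "1/2"]) (simp only: half_gt_zero_iff zero_less_one simp_thms)
  then obtain d where d: "d > 0" and dd0: "\<forall>x'\<in>{0..1}. dist x' 0 < d \<longrightarrow> dist (\<phi> x') (\<phi> 0) < 1/2"
    by blast
  have dd: "\<And>x'. x' \<in> {0..1} \<Longrightarrow> dist x' 0 < d \<Longrightarrow> dist (\<phi> x') (\<phi> 0) < 1/2"
    using dd0 by blast
  obtain n where n: "1 / real (Suc n) < d" using d nat_approx_posE by blast
  define s where "s = 1 / real (Suc n)"
  have s1: "0 < s" unfolding s_def by simp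
  have s2: "s \<le> 1" unfolding s_def by (simp add: divide_le_eq_1)
  have s3: "s < d" using n unfolding s_def .
  note s = s1 s2 s3
  have int: "\<phi> integrable_on {0..s}"
    by (rule integrable_on_subinterval[OF integrable_continuous_interval[OF cont]]) (use s in auto)
  have hi: "((\<lambda>x. \<phi> x - 1) has_integral (integral {0..s} \<phi> - Henstock_Kurzweil_Integration.content {0..s} *\<^sub>R 1)) {0..s}"
    by (intro has_integral_diff integrable_integral int has_integral_const_real)
  have "norm (integral {0..s} \<phi> - Henstock_Kurzweil_Integration.content {0..s} *\<^sub>R 1) \<le> 1/2 * Henstock_Kurzweil_Integration.content (cbox 0 s)"
  proof (rule has_integral_bound[of "1/2" "\<lambda>x. \<phi> x - 1"])
    show "((\<lambda>x. \<phi> x - 1) has_integral (integral {0..s} \<phi> - Henstock_Kurzweil_Integration.content {0..s} *\<^sub>R 1)) (cbox 0 s)"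
      using hi by simp
    fix x assume "x \<in> cbox 0 s"
    then have "x \<in> {0..1}" "dist x 0 < d" using s by (auto simp: dist_real_def)
    then have "dist (\<phi> x) (\<phi> 0) < 1/2" by (rule dd)
    then show "norm (\<phi> x - 1) \<le> 1/2" using p0 by (simp add: dist_norm)
  qed simp
  then have b: "norm (integral {0..s} \<phi> - of_real s) \<le> s / 2" using s1 by (simp add: scaleR_conv_of_real)
  show ?thesis
  proof (intro exI notI)
    assume "integral {0..1 / real (Suc n)} \<phi> = 0"
    then have "integral {0..s} \<phi> = 0" unfolding s_def .
    with b have "norm (of_real s :: complex) \<le> s / 2" by simp
    with s1 show False by simp
  qed
qed



lemma AE_witness:
  assumes P: "prob_space M" "AE \<omega> in M. P \<omega>"
  shows "\<exists>\<omega>\<in>space M. P \<omega>"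
proof (rule ccontr)
  assume *: "\<not> (\<exists>\<omega>\<in>space M. P \<omega>)"
  obtain N where N: "{x \<in> space M. \<not> P x} \<subseteq> N" "emeasure M N = 0" "N \<in> sets M"
    by (rule AE_E[OF P(2)])
  have "space M \<subseteq> N" using N(1) * by blast
  then have "emeasure M (space M) \<le> emeasure M N" by (rule emeasure_mono) (rule N(3))
  then show False using N(2) prob_space.emeasure_space_1[OF P(1)] by simp
qed



lemma no_lattice_atom:
  assumes SB: "std_brownian M W" and b: "b \<noteq> 0"
  shows "\<not> (AE \<omega> in M. exp (\<i> * complex_of_real (b * W 1 \<omega>)) = 1)"
proof
  assume AE1: "AE \<omega> in M. exp (\<i> * complex_of_real (b * W 1 \<omega>)) = 1"
  note facts = sb_facts[OF SB]
  interpret prob_space M by (rule facts(1))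
  define Z where "Z = range (\<lambda>n::int. 2 * pi * real_of_int n / b)"
  have cZ: "countable Z" unfolding Z_def by simp
  have Znull: "Z \<in> null_sets lborel" by (rule countable_imp_null_set_lborel[OF cZ])
  have inZ: "x \<in> Z" if "exp (\<i> * complex_of_real (b * x)) = 1" for x
  proof -
    from that obtain n :: int where "b * x = real_of_int (2 * n) * pi"
      unfolding exp_eq_1 by auto
    then have "x = 2 * pi * real_of_int n / b" using b by (simp add: field_simps)
    then show ?thesis unfolding Z_def by blast
  qed
  have D: "distributed M lborel (\<lambda>\<omega>. W 1 \<omega> - W 0 \<omega>) (\<lambda>x. ennreal (normal_density 0 (sqrt (1 - 0)) x))"
    using facts(5)[of 0 1] by simp
  have Wm[measurable]: "(\<lambda>\<omega>. W 1 \<omega> - W 0 \<omega>) \<in> measurable M lborel"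
    using facts(2) by measurable
  have "AE x in lborel. x \<notin> Z" by (rule AE_not_in[OF Znull])
  then have "AE x in density lborel (\<lambda>x. ennreal (normal_density 0 (sqrt (1 - 0)) x)). x \<notin> Z"
    by (subst AE_density) (auto elim!: AE_mp)
  then have "AE x in distr M lborel (\<lambda>\<omega>. W 1 \<omega> - W 0 \<omega>). x \<notin> Z"
    unfolding distributed_distr_eq_density[OF D] .
  then have AE2: "AE \<omega> in M. W 1 \<omega> - W 0 \<omega> \<notin> Z"
  proof (subst (asm) AE_distr_iff[OF Wm])
    show "{x \<in> space lborel. x \<notin> Z} \<in> sets lborel" using Znull by auto
  qed
  have "AE \<omega> in M. False"
    using AE1 AE2 AE_space
  proof (eventually_elim)
    case (elim \<omega>)
    then have "W 0 \<omega> = 0" by (intro facts(3))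
    have "W 1 \<omega> \<in> Z" by (rule inZ[OF elim(1)])
    then have "W 1 \<omega> - W 0 \<omega> \<in> Z" using \<open>W 0 \<omega> = 0\<close> by simp
    with elim(2) show False by blast
  qed
  then show False by simp
qed



lemma ring_aux: fixes c1 c2 A x y E :: complex
  shows "c1 * (A * x * E) + c2 * (A * y * E) = A * (c1 * x + c2 * y) * E"
  by (simp add: algebra_simps)

lemma sum_nbr0:
  fixes C :: "int \<Rightarrow> int \<Rightarrow> complex" and K dx :: real and A :: real and E :: complex
  shows "(\<Sum>l\<in>nbr 0. C l 0 * (complex_of_real A * exp (\<i> * complex_of_real (K * (of_int l * dx))) * E))
       = complex_of_real A * (C (-1) 0 * exp (- (\<i> * complex_of_real K * complex_of_real dx)) + C 1 0 * exp (\<i> * complex_of_real K * complex_of_real dx)) * E"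
proof -
  have nb: "nbr 0 = {-1, 1}" by (simp add: nbr_def)
  have a1: "complex_of_real (K * (of_int (-1) * dx)) = - (complex_of_real K * complex_of_real dx)" by simp
  have a2: "complex_of_real (K * (of_int 1 * dx)) = complex_of_real K * complex_of_real dx" by simp
  have e1: "exp (\<i> * complex_of_real (K * (of_int (-1) * dx))) = exp (- (\<i> * complex_of_real K * complex_of_real dx))"
    unfolding a1 by (simp only: mult_minus_right mult.assoc)
  have e2: "exp (\<i> * complex_of_real (K * (of_int 1 * dx))) = exp (\<i> * complex_of_real K * complex_of_real dx)"
    unfolding a2 by (simp only: mult.assoc)
  have "(\<Sum>l\<in>{-1, 1::int}. C l 0 * (complex_of_real A * exp (\<i> * complex_of_real (K * (of_int l * dx))) * E))
      = C (-1) 0 * (complex_of_real A * exp (\<i> * complex_of_real (K * (of_int (-1) * dx))) * E)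
        + C 1 0 * (complex_of_real A * exp (\<i> * complex_of_real (K * (of_int 1 * dx))) * E)"
    by (subst sum.insert) auto
  then show ?thesis unfolding nb e1 e2 ring_aux .
qed


lemma exp_split:
  fixes K dx :: real and l :: int
  shows "exp (\<i> * complex_of_real (K * (of_int l * dx) + y)) = exp (\<i> * complex_of_real (K * (of_int l * dx))) * exp (\<i> * complex_of_real y)"
  by (simp add: distrib_left exp_add)

lemma alg1:
  fixes A c L E J s K2 :: complex
  assumes A: "A \<noteq> 0" and F: "K2 + c \<noteq> 0"
    and e: "\<i> * (A * E - A) = - (1/2) * (A * c * L) + s * J"
    and g: "E - 1 = \<i> * (- (K2 / 2)) * L + \<i> * (- s) * (inverse A * J)"
  shows "L = 0"
proof -
  have "A * (E - 1) = A * (\<i> * (- (K2 / 2)) * L) + \<i> * (- s) * (A * inverse A * J)"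
    unfolding g by (simp add: algebra_simps)
  also have "A * inverse A = 1" using A by simp
  finally have g2: "A * (E - 1) = \<i> * (- (K2 / 2)) * A * L + \<i> * (- s) * J" by (simp add: algebra_simps)
  have "\<i> * (A * (E - 1)) = (K2 / 2) * A * L + s * J" unfolding g2 by (simp add: algebra_simps)
  moreover have "\<i> * (A * (E - 1)) = - (1/2) * (A * c * L) + s * J" using e by (simp add: algebra_simps)
  ultimately have "(K2 / 2) * A * L = - (1/2) * (A * c * L)" by simp
  then have "A * (K2 + c) * L = 0" by (simp add: algebra_simps)
  with A F show ?thesis by simp
qed

lemma L1_false:
  fixes M :: "'a measure" and W :: "real \<Rightarrow> 'a \<Rightarrow> real" and dx \<sigma> K A :: real and C :: "int \<Rightarrow> int \<Rightarrow> complex"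
  assumes SB: "std_brownian M W" and A: "A > 0"
    and sol: "solves_L1 M W C \<sigma> (\<lambda>j t \<omega>. complex_of_real A *
                 exp (\<i> * complex_of_real (K * (of_int j * dx) - (K^2 / 2) * t - \<sigma> * W t \<omega>)))"
    and F: "complex_of_real K ^ 2 + (C (-1) 0 * exp (- (\<i> * complex_of_real K * complex_of_real dx)) + C 1 0 * exp (\<i> * complex_of_real K * complex_of_real dx)) \<noteq> 0"
  shows False
proof -
  note facts = sb_facts[OF SB]
  interpret prob_space M by (rule facts(1))
  have fm: "finite_measure M" by unfold_locales
  define u where "u = (\<lambda>j t \<omega>. complex_of_real A *
                 exp (\<i> * complex_of_real (K * (of_int j * dx) - (K^2 / 2) * t - \<sigma> * W t \<omega>)))"
  define c where "c = C (-1) 0 * exp (- (\<i> * complex_of_real K * complex_of_real dx)) + C 1 0 * exp (\<i> * complex_of_real K * complex_of_real dx)"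
  define a where "a = - (K^2 / 2)"
  define b where "b = - \<sigma>"
  have sol': "solves_L1 M W C \<sigma> u" using sol unfolding u_def .
  have uE: "u l s \<omega> = complex_of_real A * exp (\<i> * complex_of_real (K * (of_int l * dx))) * Eph a b W s \<omega>" for l s \<omega>
  proof -
    have arg: "K * (of_int l * dx) - (K^2 / 2) * s - \<sigma> * W s \<omega> = K * (of_int l * dx) + (a * s + b * W s \<omega>)"
      unfolding a_def b_def by simp
    show ?thesis unfolding u_def Eph_def arg exp_split by (simp only: mult.assoc)
  qed
  have u0: "u 0 s \<omega> = complex_of_real A * Eph a b W s \<omega>" for s \<omega>
    using uE[of 0 s \<omega>] by simp
  have sumu: "(\<Sum>l\<in>nbr 0. C l 0 * u l s \<omega>) = complex_of_real A * c * Eph a b W s \<omega>" for s \<omega>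
    unfolding uE sum_nbr0 c_def ..
  have Eph0: "Eph a b W 0 \<omega> = 1" if "\<omega> \<in> space M" for \<omega>
    using facts(3)[OF that] by (simp add: Eph_def)
  have key: "AE \<omega> in M. integral {0..t} (\<lambda>s. Eph a b W s \<omega>) = 0" if t: "t > 0" for t
  proof -
    obtain I where Is: "strat_integral_is M W (u 0) t I"
      and eq: "AE \<omega> in M. \<i> * (u 0 t \<omega> - u 0 0 \<omega>) =
            - (1/2) * integral {0..t} (\<lambda>s. \<Sum>l\<in>nbr 0. C l 0 * u l s \<omega>)
            + complex_of_real \<sigma> * I \<omega>"
      using sol' t unfolding solves_L1_def by (meson less_imp_le)
    have Im[measurable]: "I \<in> borel_measurable M" using Is unfolding strat_integral_is_def by simp
    note tip1 = strat_tip[OF Is t]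
    have tip2: "tip M (\<lambda>m \<omega>. complex_of_real A * (\<Sum>k<Suc m. (Eph a b W (tau t m k) \<omega> + Eph a b W (tau t m (Suc k)) \<omega>) / 2
                  * complex_of_real (W (tau t m (Suc k)) \<omega> - W (tau t m k) \<omega>))) I"
    proof (rule tip_cong[OF tip1])
      fix m \<omega>
      show "(\<Sum>k<Suc m. (u 0 (tau t m k) \<omega> + u 0 (tau t m (Suc k)) \<omega>) / 2 * complex_of_real (W (tau t m (Suc k)) \<omega> - W (tau t m k) \<omega>))
        = complex_of_real A * (\<Sum>k<Suc m. (Eph a b W (tau t m k) \<omega> + Eph a b W (tau t m (Suc k)) \<omega>) / 2
                  * complex_of_real (W (tau t m (Suc k)) \<omega> - W (tau t m k) \<omega>))"
        unfolding u0 sum_distrib_left by (rule sum.cong) (simp_all add: algebra_simps)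
    qed simp
    have tip3: "tip M (\<lambda>m \<omega>. \<Sum>k<Suc m. (Eph a b W (tau t m k) \<omega> + Eph a b W (tau t m (Suc k)) \<omega>) / 2
                  * complex_of_real (W (tau t m (Suc k)) \<omega> - W (tau t m k) \<omega>)) (\<lambda>\<omega>. inverse (complex_of_real A) * I \<omega>)"
      by (rule tip_cong[OF tip_scale[OF tip2, of "inverse (complex_of_real A)"]]) (use A in auto)
    have gen: "AE \<omega> in M. Eph a b W t \<omega> - 1
           = \<i> * complex_of_real a * integral {0..t} (\<lambda>s. Eph a b W s \<omega>) + \<i> * complex_of_real b * (inverse (complex_of_real A) * I \<omega>)"
      by (rule gen_limit[OF SB t _ tip3]) measurable
    show ?thesis
      using gen eq AE_space
    proof eventually_elim
      case (elim \<omega>)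
      have i1: "integral {0..t} (\<lambda>s. \<Sum>l\<in>nbr 0. C l 0 * u l s \<omega>) = complex_of_real A * c * integral {0..t} (\<lambda>s. Eph a b W s \<omega>)"
        unfolding sumu by simp
      have e: "\<i> * (complex_of_real A * Eph a b W t \<omega> - complex_of_real A) =
            - (1/2) * (complex_of_real A * c * integral {0..t} (\<lambda>s. Eph a b W s \<omega>)) + complex_of_real \<sigma> * I \<omega>"
        using elim(2) unfolding i1 u0 Eph0[OF elim(3)] by simp
      have g: "Eph a b W t \<omega> - 1 = \<i> * (- (complex_of_real (K^2) / 2)) * integral {0..t} (\<lambda>s. Eph a b W s \<omega>)
                 + \<i> * (- complex_of_real \<sigma>) * (inverse (complex_of_real A) * I \<omega>)"
        using elim(1) unfolding a_def b_def by simp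
      show ?case
        by (rule alg1[OF _ _ e g]) (use A F in \<open>simp_all add: c_def\<close>)
    qed
  qed
  have "AE \<omega> in M. \<forall>n. integral {0..1 / real (Suc n)} (\<lambda>s. Eph a b W s \<omega>) = 0"
    by (rule AE_all_countable[THEN iffD2, rule_format], rule key) simp
  with AE_space have "AE \<omega> in M. \<omega> \<in> space M \<and> (\<forall>n. integral {0..1 / real (Suc n)} (\<lambda>s. Eph a b W s \<omega>) = 0)"
    by eventually_elim simp
  then obtain \<omega> where \<omega>: "\<omega> \<in> space M" and z: "\<forall>n. integral {0..1 / real (Suc n)} (\<lambda>s. Eph a b W s \<omega>) = 0"
    using AE_witness[OF facts(1)] by blast
  have cont: "continuous_on {0..1} (\<lambda>s. Eph a b W s \<omega>)"
  proof -
    have "continuous_on {0..1} (\<lambda>s. W s \<omega>)"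
      by (rule continuous_on_subset[OF facts(4)[OF \<omega>]]) auto
    then show ?thesis unfolding Eph_def by (intro continuous_intros)
  qed
  from small_integral_nonzero[OF cont Eph0[OF \<omega>]] z show False by blast
qed


lemma alg2:
  fixes A c E J K2 :: complex
  assumes A: "A \<noteq> 0" and F: "K2 + c \<noteq> 0"
    and h1: "A * c * (E - 1) = \<i> * (- (K2 / 2)) * J"
    and h2: "\<i> * (A * E - A) = - (1/2) * J"
  shows "E = 1"
proof -
  have "J = -2 * (- (1/2) * J)" by simp
  also have "\<dots> = -2 * (\<i> * (A * E - A))" unfolding h2 ..
  finally have J: "J = -2 * (\<i> * (A * E - A))" .
  have "A * c * (E - 1) = - (K2 * A * (E - 1))" unfolding h1 J by (simp add: algebra_simps)
  then have "A * (K2 + c) * (E - 1) = 0" by (simp add: algebra_simps)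
  with A F show ?thesis by simp
qed

lemma L2_false:
  fixes M :: "'a measure" and W :: "real \<Rightarrow> 'a \<Rightarrow> real" and dx K A :: real and C :: "int \<Rightarrow> int \<Rightarrow> complex"
  assumes SB: "std_brownian M W" and A: "A > 0" and K: "K \<noteq> 0"
    and sol: "solves_L2 M W C (\<lambda>j t \<omega>. complex_of_real A *
                 exp (\<i> * complex_of_real (K * (of_int j * dx) - (K^2 / 2) * W t \<omega>)))"
    and F: "complex_of_real K ^ 2 + (C (-1) 0 * exp (- (\<i> * complex_of_real K * complex_of_real dx)) + C 1 0 * exp (\<i> * complex_of_real K * complex_of_real dx)) \<noteq> 0"
  shows False
proof -
  note facts = sb_facts[OF SB]
  interpret prob_space M by (rule facts(1))
  have fm: "finite_measure M" by unfold_locales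
  define u where "u = (\<lambda>j t \<omega>. complex_of_real A *
                 exp (\<i> * complex_of_real (K * (of_int j * dx) - (K^2 / 2) * W t \<omega>)))"
  define c where "c = C (-1) 0 * exp (- (\<i> * complex_of_real K * complex_of_real dx)) + C 1 0 * exp (\<i> * complex_of_real K * complex_of_real dx)"
  define b where "b = - (K^2 / 2)"
  have b0: "b \<noteq> 0" using K unfolding b_def by simp
  have sol': "solves_L2 M W C u" using sol unfolding u_def .
  have uE: "u l s \<omega> = complex_of_real A * exp (\<i> * complex_of_real (K * (of_int l * dx))) * Eph 0 b W s \<omega>" for l s \<omega>
  proof -
    have arg: "K * (of_int l * dx) - (K^2 / 2) * W s \<omega> = K * (of_int l * dx) + (0 * s + b * W s \<omega>)"
      unfolding b_def by simp
    show ?thesis unfolding u_def Eph_def arg exp_split by (simp only: mult.assoc)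
  qed
  have u0: "u 0 s \<omega> = complex_of_real A * Eph 0 b W s \<omega>" for s \<omega>
    using uE[of 0 s \<omega>] by simp
  have sumu: "(\<Sum>l\<in>nbr 0. C l 0 * u l s \<omega>) = complex_of_real A * c * Eph 0 b W s \<omega>" for s \<omega>
    unfolding uE sum_nbr0 c_def ..
  have Eph0: "Eph 0 b W 0 \<omega> = 1" if "\<omega> \<in> space M" for \<omega>
    using facts(3)[OF that] by (simp add: Eph_def)
  obtain I where Is: "strat_integral_is M W (\<lambda>s \<omega>. \<Sum>l\<in>nbr 0. C l 0 * u l s \<omega>) 1 I"
    and eq: "AE \<omega> in M. \<i> * (u 0 1 \<omega> - u 0 0 \<omega>) = - (1/2) * I \<omega>"
    using sol' unfolding solves_L2_def by (meson zero_le_one)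
  have Im[measurable]: "I \<in> borel_measurable M" using Is unfolding strat_integral_is_def by simp
  note tip1 = strat_tip[OF Is zero_less_one]
  define S where "S m \<omega> = (\<Sum>k<Suc m. (Eph 0 b W (tau 1 m k) \<omega> + Eph 0 b W (tau 1 m (Suc k)) \<omega>) / 2
                  * complex_of_real (W (tau 1 m (Suc k)) \<omega> - W (tau 1 m k) \<omega>))" for m \<omega>
  have tip2: "tip M (\<lambda>m \<omega>. (complex_of_real A * c) * S m \<omega>) I"
  proof (rule tip_cong[OF tip1])
    fix m \<omega>
    show "(\<Sum>k<Suc m. ((\<Sum>l\<in>nbr 0. C l 0 * u l (tau 1 m k) \<omega>) + (\<Sum>l\<in>nbr 0. C l 0 * u l (tau 1 m (Suc k)) \<omega>)) / 2
             * complex_of_real (W (tau 1 m (Suc k)) \<omega> - W (tau 1 m k) \<omega>))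
        = (complex_of_real A * c) * S m \<omega>"
      unfolding sumu S_def sum_distrib_left by (rule sum.cong) (simp_all add: algebra_simps)
  qed simp
  have claim: "AE \<omega> in M. (complex_of_real A * c) * (Eph 0 b W 1 \<omega> - 1) = \<i> * complex_of_real b * I \<omega>"
  proof (cases "complex_of_real A * c = 0")
    case True
    have "tip M (\<lambda>m \<omega>. 0) I" by (rule tip_cong[OF tip2]) (use True in auto)
    then have "AE \<omega> in M. (\<lambda>\<omega>. 0) \<omega> = I \<omega>"
      by (intro tip_unique_const[OF fm]) auto
    then show ?thesis by eventually_elim (use True in simp)
  next
    case False
    have tip3: "tip M S (\<lambda>\<omega>. inverse (complex_of_real A * c) * I \<omega>)"
    proof (rule tip_cong[OF tip_scale[OF tip2, of "inverse (complex_of_real A * c)"]])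
      fix m \<omega>
      show "inverse (complex_of_real A * c) * (complex_of_real A * c * S m \<omega>) = S m \<omega>"
        using False by (metis mult.assoc mult.left_neutral left_inverse)
    qed simp
    have gen: "AE \<omega> in M. Eph 0 b W 1 \<omega> - 1
           = \<i> * complex_of_real 0 * integral {0..1} (\<lambda>s. Eph 0 b W s \<omega>) + \<i> * complex_of_real b * (inverse (complex_of_real A * c) * I \<omega>)"
      by (rule gen_limit[OF SB zero_less_one _ tip3[unfolded S_def]]) measurable
    then show ?thesis
    proof eventually_elim
      case (elim \<omega>)
      then have "Eph 0 b W 1 \<omega> - 1 = \<i> * complex_of_real b * (inverse (complex_of_real A * c) * I \<omega>)" by simp
      then have hh: "(complex_of_real A * c) * (Eph 0 b W 1 \<omega> - 1)
          = \<i> * complex_of_real b * (((complex_of_real A * c) * inverse (complex_of_real A * c)) * I \<omega>)"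
        by (simp add: algebra_simps)
      have X: "complex_of_real A * c * inverse (complex_of_real A * c) = 1" using False by (rule right_inverse)
      show ?case using hh unfolding X by simp
    qed
  qed
  have "AE \<omega> in M. Eph 0 b W 1 \<omega> = 1"
    using claim eq AE_space
  proof eventually_elim
    case (elim \<omega>)
    have h2: "\<i> * (complex_of_real A * Eph 0 b W 1 \<omega> - complex_of_real A) = - (1/2) * I \<omega>"
      using elim(2) unfolding u0 Eph0[OF elim(3)] by simp
    have h1: "complex_of_real A * c * (Eph 0 b W 1 \<omega> - 1) = \<i> * (- (complex_of_real (K^2) / 2)) * I \<omega>"
      using elim(1) unfolding b_def by simp
    show ?case by (rule alg2[OF _ _ h1 h2]) (use A F in \<open>simp_all add: c_def\<close>)
  qed
  then have "AE \<omega> in M. exp (\<i> * complex_of_real (b * W 1 \<omega>)) = 1"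
    by eventually_elim (simp add: Eph_def)
  with no_lattice_atom[OF SB b0] show False by blast
qed


theorem mainTheorem1:
  fixes M :: "'a measure" and W :: "real \<Rightarrow> 'a \<Rightarrow> real"
    and dx \<sigma> :: real and C :: "int \<Rightarrow> int \<Rightarrow> complex"
  assumes "dx > 0" and "std_brownian M W"
  shows "finite {K::real. \<exists>A::real. A > 0 \<and>
            solves_L1 M W C \<sigma>
              (\<lambda>j t \<omega>. complex_of_real A *
                 exp (\<i> * complex_of_real (K * (of_int j * dx) - (K^2 / 2) * t - \<sigma> * W t \<omega>)))}
       \<and> finite {K::real. \<exists>A::real. A > 0 \<and>
            solves_L2 M W C
              (\<lambda>j t \<omega>. complex_of_real A *
                 exp (\<i> * complex_of_real (K * (of_int j * dx) - (K^2 / 2) * W t \<omega>)))}"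
proof -
  define F where "F = (\<lambda>z::complex. z^2 + C (-1) 0 * exp (- (\<i> * z * of_real dx)) + C 1 0 * exp (\<i> * z * of_real dx))"
  have fin: "finite {K::real. F (of_real K) = 0}"
    using disp_finite[where \<alpha>="C (-1) 0" and \<beta>="C 1 0" and d=dx] unfolding F_def by simp
  have Feq: "F (of_real K) = complex_of_real K ^ 2 + (C (-1) 0 * exp (- (\<i> * complex_of_real K * complex_of_real dx)) + C 1 0 * exp (\<i> * complex_of_real K * complex_of_real dx))" for K
    unfolding F_def by (simp add: add.assoc)
  have s1: "{K::real. \<exists>A::real. A > 0 \<and>
            solves_L1 M W C \<sigma>
              (\<lambda>j t \<omega>. complex_of_real A *
                 exp (\<i> * complex_of_real (K * (of_int j * dx) - (K^2 / 2) * t - \<sigma> * W t \<omega>)))}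
        \<subseteq> {K::real. F (of_real K) = 0}"
  proof
    fix K assume "K \<in> {K::real. \<exists>A::real. A > 0 \<and>
            solves_L1 M W C \<sigma>
              (\<lambda>j t \<omega>. complex_of_real A *
                 exp (\<i> * complex_of_real (K * (of_int j * dx) - (K^2 / 2) * t - \<sigma> * W t \<omega>)))}"
    then obtain A where A: "A > 0" and sol: "solves_L1 M W C \<sigma>
              (\<lambda>j t \<omega>. complex_of_real A *
                 exp (\<i> * complex_of_real (K * (of_int j * dx) - (K^2 / 2) * t - \<sigma> * W t \<omega>)))" by blast
    show "K \<in> {K::real. F (of_real K) = 0}"
    proof (rule ccontr)
      assume "K \<notin> {K::real. F (of_real K) = 0}"
      then have "F (of_real K) \<noteq> 0" by simp
      then show False using L1_false[OF assms(2) A sol] unfolding Feq by blast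
    qed
  qed
  have s2: "{K::real. \<exists>A::real. A > 0 \<and>
            solves_L2 M W C
              (\<lambda>j t \<omega>. complex_of_real A *
                 exp (\<i> * complex_of_real (K * (of_int j * dx) - (K^2 / 2) * W t \<omega>)))}
        \<subseteq> insert 0 {K::real. F (of_real K) = 0}"
  proof
    fix K assume "K \<in> {K::real. \<exists>A::real. A > 0 \<and>
            solves_L2 M W C
              (\<lambda>j t \<omega>. complex_of_real A *
                 exp (\<i> * complex_of_real (K * (of_int j * dx) - (K^2 / 2) * W t \<omega>)))}"
    then obtain A where A: "A > 0" and sol: "solves_L2 M W C
              (\<lambda>j t \<omega>. complex_of_real A *
                 exp (\<i> * complex_of_real (K * (of_int j * dx) - (K^2 / 2) * W t \<omega>)))" by blast
    show "K \<in> insert 0 {K::real. F (of_real K) = 0}"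
    proof (rule ccontr)
      assume "K \<notin> insert 0 {K::real. F (of_real K) = 0}"
      then have K0: "K \<noteq> 0" and "F (of_real K) \<noteq> 0" by auto
      then show False using L2_false[OF assms(2) A K0 sol] unfolding Feq by blast
    qed
  qed
  show ?thesis
  proof
    show "finite {K::real. \<exists>A::real. A > 0 \<and>
            solves_L1 M W C \<sigma>
              (\<lambda>j t \<omega>. complex_of_real A *
                 exp (\<i> * complex_of_real (K * (of_int j * dx) - (K^2 / 2) * t - \<sigma> * W t \<omega>)))}"
      by (rule finite_subset[OF s1 fin])
    show "finite {K::real. \<exists>A::real. A > 0 \<and>
            solves_L2 M W C
              (\<lambda>j t \<omega>. complex_of_real A *
                 exp (\<i> * complex_of_real (K * (of_int j * dx) - (K^2 / 2) * W t \<omega>)))}"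
      by (rule finite_subset[OF s2]) (use fin in simp)
  qed
qed


end
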